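(* Let $A$ and $B$ be two $n\times n\times n$ alternating sign hypermatrices. Then $L(A)=L(B)$ if and only if $A-B$ can be expressed as a sum of pairs of T-blocks, where the two T-blocks in each pair have opposite depth and occupy the same vertical lines.
   Context: An $n\times n\times n$ hypermatrix $A=[a_{ijk}]$ has row lines $A_{*jk}=[a_{ijk}: i=1,\dots,n]$, column lines $A_{i*k}=[a_{ijk}: j=1,\dots,n]$ and vertical lines $A_{ij*}=[a_{ijk}: k=1,\dots,n]$. An alternating sign hypermatrix (ASHM) is an $n\times n\times n$ hypermatrix with entries in $\{0,1,-1\}$ such that in every row line, column line and vertical line the non-zero entries alternate in sign, starting and ending with $+1$. The $k$-th plane of $A$ is $P_k(A)=[a_{ijk}]_{i,j=1}^n$, and $L(A)=\sum_{k=1}^n k\,P_k(A)$. For indices $i_1<i_2$, $j_1<j_2$, $k_1<k_2$, the hypermatrix $T_{i_1,j_1,k_1:\,i_2,j_2,k_2}=[t_{ijk}]$ has $t_{ijk}=1$ for $(i,j,k)\in\{(i_1,j_1,k_1),(i_2,j_2,k_1),(i_2,j_1,k_2),(i_1,j_2,k_2)\}$, $t_{ijk}=-1$ for $(i,j,k)\in\{(i_2,j_1,k_1),(i_1,j_2,k_1),(i_1,j_1,k_2),(i_2,j_2,k_2)\}$, and $0$ otherwise. A T-block is a hypermatrix $T=\pm T_{i_1,j_1,k_1:\,i_2,j_2,k_2}$; its depth is $d(T)=k_2-k_1$ if $T=T_{i_1,j_1,k_1:\,i_2,j_2,k_2}$ and $d(T)=k_1-k_2$ if $T=-T_{i_1,j_1,k_1:\,i_2,j_2,k_2}$.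 Two T-blocks $T_1,T_2$ have opposite depth if $d(T_1)=-d(T_2)$. A T-block $\pm T_{i_1,j_1,k_1:\,i_2,j_2,k_2}$ occupies the vertical lines at positions $(i_1,j_1),(i_1,j_2),(i_2,j_1),(i_2,j_2)$. *)

theory Defs
  imports Main
begin

text \<open>An n x n x n hypermatrix is represented as a function nat => nat => nat => int,
  with indices ranging over {1..n}; entries outside {1..n}^3 are required to be 0.\<close>

type_synonym hypermatrix = "nat \<Rightarrow> nat \<Rightarrow> nat \<Rightarrow> int"

definition alt_sign_line :: "nat \<Rightarrow> (nat \<Rightarrow> int) \<Rightarrow> bool" where
  "alt_sign_line n v \<longleftrightarrow>
     (let xs = filter (\<lambda>x. x \<noteq> 0) (map v [1..<n+1]) in
        xs \<noteq> [] \<and> hd xs = 1 \<and> last xs = 1 \<and>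
        (\<forall>m. Suc m < length xs \<longrightarrow> xs ! Suc m = - (xs ! m)))"

definition ashm :: "nat \<Rightarrow> hypermatrix \<Rightarrow> bool" where
  "ashm n A \<longleftrightarrow>
     (\<forall>i j k. \<not> (i \<in> {1..n} \<and> j \<in> {1..n} \<and> k \<in> {1..n}) \<longrightarrow> A i j k = 0) \<and>
     (\<forall>i j k. A i j k \<in> {0, 1, -1}) \<and>
     (\<forall>j\<in>{1..n}. \<forall>k\<in>{1..n}. alt_sign_line n (\<lambda>i. A i j k)) \<and>
     (\<forall>i\<in>{1..n}. \<forall>k\<in>{1..n}. alt_sign_line n (\<lambda>j. A i j k)) \<and>
     (\<forall>i\<in>{1..n}. \<forall>j\<in>{1..n}. alt_sign_line n (\<lambda>k. A i j k))"

definition Lmat :: "nat \<Rightarrow> hypermatrix \<Rightarrow> nat \<Rightarrow> nat \<Rightarrow> int" where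
  "Lmat n A i j = (\<Sum>k = 1..n. int k * A i j k)"

definition Thm :: "nat \<Rightarrow> nat \<Rightarrow> nat \<Rightarrow> nat \<Rightarrow> nat \<Rightarrow> nat \<Rightarrow> hypermatrix" where
  "Thm i1 j1 k1 i2 j2 k2 = (\<lambda>i j k.
     if (i, j, k) \<in> {(i1, j1, k1), (i2, j2, k1), (i2, j1, k2), (i1, j2, k2)} then 1
     else if (i, j, k) \<in> {(i2, j1, k1), (i1, j2, k1), (i1, j1, k2), (i2, j2, k2)} then -1
     else 0)"

text \<open>A T-block is encoded as (s, i1, j1, k1, i2, j2, k2), standing for s * T_{i1,j1,k1:i2,j2,k2}.\<close>
type_synonym tblock = "int \<times> nat \<times> nat \<times> nat \<times> nat \<times> nat \<times> nat"

fun valid_tblock :: "nat \<Rightarrow> tblock \<Rightarrow> bool" where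
  "valid_tblock n (s, i1, j1, k1, i2, j2, k2) \<longleftrightarrow>
     s \<in> {1, -1} \<and> 1 \<le> i1 \<and> i1 < i2 \<and> i2 \<le> n \<and> 1 \<le> j1 \<and> j1 < j2 \<and> j2 \<le> n \<and>
     1 \<le> k1 \<and> k1 < k2 \<and> k2 \<le> n"

fun tblock_hm :: "tblock \<Rightarrow> hypermatrix" where
  "tblock_hm (s, i1, j1, k1, i2, j2, k2) = (\<lambda>i j k. s * Thm i1 j1 k1 i2 j2 k2 i j k)"

fun depth :: "tblock \<Rightarrow> int" where
  "depth (s, i1, j1, k1, i2, j2, k2) = (if s = 1 then int k2 - int k1 else int k1 - int k2)"

fun vlines :: "tblock \<Rightarrow> (nat \<times> nat) set" where
  "vlines (s, i1, j1, k1, i2, j2, k2) = {(i1, j1), (i1, j2), (i2, j1), (i2, j2)}"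

end

theory Submission
  imports Defs
begin

definition g :: "nat \<Rightarrow> nat \<Rightarrow> nat \<Rightarrow> int" where
  "g a b x = (if x = a then 1 else if x = b then -1 else 0)"

lemma Thm_g: "i1 \<noteq> i2 \<Longrightarrow> j1 \<noteq> j2 \<Longrightarrow> k1 \<noteq> k2 \<Longrightarrow>
  Thm i1 j1 k1 i2 j2 k2 i j k = g i1 i2 i * g j1 j2 j * g k1 k2 k"
  by (auto simp: Thm_def g_def)

lemma g_alt: "a \<noteq> b \<Longrightarrow> g a b k = (if k = a then 1 else 0) - (if k = b then 1 else 0)"
  by (auto simp: g_def)

lemma sum_g:
  assumes "a \<in> {1..N}" "b \<in> {1..N}" "a \<noteq> b"
  shows "(\<Sum>k=1..N. g a b k) = 0"
proof -
  have "(\<Sum>k=1..N. g a b k) = (\<Sum>k=1..N. (if k = a then 1 else 0) - (if k = b then 1 else (0::int)))"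
    using assms by (simp add: g_alt)
  also have "\<dots> = 0" using assms by (simp add: sum_subtractf)
  finally show ?thesis .
qed

lemma msum_g:
  assumes "a \<in> {1..N}" "b \<in> {1..N}" "a \<noteq> b"
  shows "(\<Sum>k=1..N. int k * g a b k) = int a - int b"
proof -
  have "(\<Sum>k=1..N. int k * g a b k) = (\<Sum>k=1..N. (if k = a then int k else 0) - (if k = b then int k else (0::int)))"
    using assms by (intro sum.cong) (auto simp: g_alt)
  also have "\<dots> = int a - int b" using assms by (simp add: sum_subtractf)
  finally show ?thesis .
qed

definition decomp :: "nat \<Rightarrow> hypermatrix \<Rightarrow> bool" where
  "decomp n D \<longleftrightarrow> (\<exists>ps :: (tblock \<times> tblock) list.
       (\<forall>(T1, T2) \<in> set ps. valid_tblock n T1 \<and> valid_tblock n T2 \<and>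
                            depth T1 = - depth T2 \<and> vlines T1 = vlines T2) \<and>
       D = (\<lambda>i j k. \<Sum>(T1, T2) \<leftarrow> ps. tblock_hm T1 i j k + tblock_hm T2 i j k))"

lemma decomp_0: "decomp n (\<lambda>i j k. 0)"
  unfolding decomp_def by (rule exI[of _ "[]"]) simp

lemma decomp_add:
  assumes "decomp n X" "decomp n Y"
  shows "decomp n (\<lambda>i j k. X i j k + Y i j k)"
proof -
  obtain ps1 where p1: "\<forall>(T1, T2) \<in> set ps1. valid_tblock n T1 \<and> valid_tblock n T2 \<and>
                            depth T1 = - depth T2 \<and> vlines T1 = vlines T2"
    "X = (\<lambda>i j k. \<Sum>(T1, T2) \<leftarrow> ps1. tblock_hm T1 i j k + tblock_hm T2 i j k)"
    using assms(1) unfolding decomp_def by blast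
  obtain ps2 where p2: "\<forall>(T1, T2) \<in> set ps2. valid_tblock n T1 \<and> valid_tblock n T2 \<and>
                            depth T1 = - depth T2 \<and> vlines T1 = vlines T2"
    "Y = (\<lambda>i j k. \<Sum>(T1, T2) \<leftarrow> ps2. tblock_hm T1 i j k + tblock_hm T2 i j k)"
    using assms(2) unfolding decomp_def by blast
  show ?thesis unfolding decomp_def
    by (rule exI[of _ "ps1 @ ps2"]) (use p1 p2 in auto)
qed

fun negT :: "tblock \<Rightarrow> tblock" where
  "negT (s, r) = (- s, r)"

lemma negT_props:
  assumes "valid_tblock n T"
  shows "valid_tblock n (negT T)" "depth (negT T) = - depth T" "vlines (negT T) = vlines T"
    "tblock_hm (negT T) i j k = - tblock_hm T i j k"
  using assms by (cases T; auto)+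

lemma sum_list_neg_pairs:
  "(\<Sum>(T1, T2) \<leftarrow> map (\<lambda>(T1,T2). (negT T1, negT T2)) ps. tblock_hm T1 i j k + tblock_hm T2 i j k)
   = - (\<Sum>(T1, T2) \<leftarrow> ps. tblock_hm T1 i j k + tblock_hm T2 i j k)"
proof (induction ps)
  case Nil then show ?case by simp
next
  case (Cons p ps)
  obtain T1 T2 where p: "p = (T1, T2)" by (cases p)
  have h: "tblock_hm (negT T) i j k = - tblock_hm T i j k" for T
    by (cases T) auto
  show ?case using Cons by (simp add: p h)
qed

lemma decomp_neg:
  assumes "decomp n X"
  shows "decomp n (\<lambda>i j k. - X i j k)"
proof -
  obtain ps where p: "\<forall>(T1, T2) \<in> set ps. valid_tblock n T1 \<and> valid_tblock n T2 \<and>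
                            depth T1 = - depth T2 \<and> vlines T1 = vlines T2"
    "X = (\<lambda>i j k. \<Sum>(T1, T2) \<leftarrow> ps. tblock_hm T1 i j k + tblock_hm T2 i j k)"
    using assms unfolding decomp_def by blast
  show ?thesis unfolding decomp_def
  proof (rule exI[of _ "map (\<lambda>(T1,T2). (negT T1, negT T2)) ps"], intro conjI)
    show "\<forall>(T1, T2)\<in>set (map (\<lambda>(T1, T2). (negT T1, negT T2)) ps).
       valid_tblock n T1 \<and> valid_tblock n T2 \<and> depth T1 = - depth T2 \<and> vlines T1 = vlines T2"
    proof (intro ballI)
      fix x assume "x \<in> set (map (\<lambda>(T1, T2). (negT T1, negT T2)) ps)"
      then obtain T1 T2 where x: "x = (negT T1, negT T2)" and m: "(T1, T2) \<in> set ps" by auto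
      have h: "valid_tblock n T1" "valid_tblock n T2" "depth T1 = - depth T2" "vlines T1 = vlines T2"
        using p(1) m by auto
      show "case x of (T1, T2) \<Rightarrow> valid_tblock n T1 \<and> valid_tblock n T2 \<and> depth T1 = - depth T2 \<and> vlines T1 = vlines T2"
        unfolding x using h negT_props[OF h(1)] negT_props[OF h(2)] by simp
    qed
    show "(\<lambda>i j k. - X i j k) = (\<lambda>i j k. \<Sum>(T1, T2)\<leftarrow>map (\<lambda>(T1, T2). (negT T1, negT T2)) ps.
                tblock_hm T1 i j k + tblock_hm T2 i j k)"
      by (simp only: p(2) sum_list_neg_pairs)
  qed
qed

lemma decomp_nat_mult:
  assumes "decomp n X"
  shows "decomp n (\<lambda>i j k. int m * X i j k)"
proof (induction m)
  case 0 then show ?case using decomp_0 by simp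
next
  case (Suc m)
  have "decomp n (\<lambda>i j k. int m * X i j k + X i j k)"
    using decomp_add[OF Suc assms] by simp
  then show ?case by (simp add: algebra_simps)
qed

lemma decomp_mult:
  assumes "decomp n X"
  shows "decomp n (\<lambda>i j k. z * X i j k)"
proof (cases "z \<ge> 0")
  case True
  then show ?thesis using decomp_nat_mult[OF assms, of "nat z"] by simp
next
  case False
  have "decomp n (\<lambda>i j k. - (int (nat (-z)) * X i j k))"
    using decomp_neg[OF decomp_nat_mult[OF assms, of "nat (-z)"]] by simp
  then show ?thesis using False by simp
qed

lemma decomp_sum:
  assumes "finite S" "\<forall>x\<in>S. decomp n (F x)"
  shows "decomp n (\<lambda>i j k. \<Sum>x\<in>S. F x i j k)"
  using assms
proof (induction S rule: finite_induct)
  case empty then show ?case using decomp_0 by simp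
next
  case (insert x S)
  then show ?case using decomp_add[of n "F x" "\<lambda>i j k. \<Sum>x\<in>S. F x i j k"] by simp
qed

definition c :: "nat \<Rightarrow> nat \<Rightarrow> int" where
  "c a k = g a (Suc a) k - g (Suc a) (Suc (Suc a)) k"

inductive span1 :: "nat \<Rightarrow> (nat \<Rightarrow> int) \<Rightarrow> bool" for N where
  span1_0: "span1 N (\<lambda>k. 0)"
| span1_step: "span1 N v \<Longrightarrow> 1 \<le> a \<Longrightarrow> a + 2 \<le> N \<Longrightarrow> span1 N (\<lambda>k. v k + z * c a k)"

definition H :: "nat \<Rightarrow> nat \<Rightarrow> (nat \<Rightarrow> int) \<Rightarrow> hypermatrix" where
  "H i j v = (\<lambda>i' j' k. g 1 i i' * g 1 j j' * v k)"

lemma decomp_Hc: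
  assumes "2 \<le> i" "i \<le> n" "2 \<le> j" "j \<le> n" "1 \<le> a" "a + 2 \<le> n"
  shows "decomp n (H i j (c a))"
  unfolding decomp_def
proof (rule exI[of _ "[((1,1,1,a,i,j,Suc a), (-1,1,1,Suc a,i,j,Suc (Suc a)))]"], intro conjI)
  show "\<forall>(T1, T2)\<in>set [((1, 1, 1, a, i, j, Suc a), - 1, 1, 1, Suc a, i, j, Suc (Suc a))].
       valid_tblock n T1 \<and> valid_tblock n T2 \<and> depth T1 = - depth T2 \<and> vlines T1 = vlines T2"
    using assms by auto
  show "H i j (c a) = (\<lambda>i' j' k. \<Sum>(T1, T2)\<leftarrow>[((1, 1, 1, a, i, j, Suc a), - 1, 1, 1, Suc a, i, j, Suc (Suc a))].
              tblock_hm T1 i' j' k + tblock_hm T2 i' j' k)"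
    using assms by (auto simp: H_def c_def Thm_g algebra_simps intro!: ext)
qed

lemma decomp_H:
  assumes "span1 n v" "2 \<le> i" "i \<le> n" "2 \<le> j" "j \<le> n"
  shows "decomp n (H i j v)"
  using assms(1)
proof (induction rule: span1.induct)
  case span1_0
  then show ?case using decomp_0 by (simp add: H_def)
next
  case (span1_step v a z)
  have "decomp n (\<lambda>i' j' k. H i j v i' j' k + z * H i j (c a) i' j' k)"
    using decomp_add[OF span1_step.IH decomp_mult[OF decomp_Hc]] assms span1_step by simp
  then show ?case by (simp add: H_def algebra_simps)
qed


lemma c_sum: "1 \<le> a \<Longrightarrow> a + 2 \<le> N \<Longrightarrow> (\<Sum>k=1..N. c a k) = 0"
  using sum_g[of a N "Suc a"] sum_g[of "Suc a" N "Suc (Suc a)"] by (simp add: c_def sum_subtractf)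

lemma c_msum: "1 \<le> a \<Longrightarrow> a + 2 \<le> N \<Longrightarrow> (\<Sum>k=1..N. int k * c a k) = 0"
  using msum_g[of a N "Suc a"] msum_g[of "Suc a" N "Suc (Suc a)"] by (simp add: c_def right_diff_distrib sum_subtractf)

lemma span1_lemma:
  "m \<le> N \<Longrightarrow> (\<forall>k. v k \<noteq> 0 \<longrightarrow> 1 \<le> k \<and> k \<le> m) \<Longrightarrow> (\<Sum>k=1..N. v k) = 0 \<Longrightarrow>
   (\<Sum>k=1..N. int k * v k) = 0 \<Longrightarrow> span1 N v"
proof (induction m arbitrary: v)
  case 0
  then have "v = (\<lambda>k. 0)" by (auto intro!: ext)
  then show ?case using span1_0 by simp
next
  case (Suc m)
  show ?case
  proof (cases "Suc m \<le> 2")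
    case True
    have sup: "v k = 0" if "k \<noteq> 1" "k \<noteq> 2" for k
    proof -
      have "\<not> (1 \<le> k \<and> k \<le> Suc m)" using that True by arith
      then show ?thesis using Suc.prems(2) by blast
    qed
    have ve: "v = (\<lambda>k. (if k = 1 then v 1 else 0) + (if k = 2 then v 2 else 0))"
    proof
      fix k show "v k = (if k = 1 then v 1 else 0) + (if k = 2 then v 2 else 0)"
        using sup[of k] by (cases "k = 1"; cases "k = 2") simp_all
    qed
    have s1: "(\<Sum>k=1..N. v k) = (if 1 \<le> N then v 1 else 0) + (if 2 \<le> N then v 2 else 0)"
      by (subst ve) (simp add: sum.distrib)
    have s2: "(\<Sum>k=1..N. int k * v k) = (if 1 \<le> N then v 1 else 0) + (if 2 \<le> N then 2 * v 2 else 0)"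
    proof -
      have "(\<Sum>k=1..N. int k * v k) = (\<Sum>k=1..N. (if k = 1 then v 1 else 0) + (if k = 2 then 2 * v 2 else 0))"
      proof (rule sum.cong)
        fix k show "int k * v k = (if k = 1 then v 1 else 0) + (if k = 2 then 2 * v 2 else 0)"
          using sup[of k] by (cases "k = 1"; cases "k = 2") simp_all
      qed simp
      then show ?thesis by (simp add: sum.distrib)
    qed
    have "v 1 = 0 \<and> v 2 = 0"
    proof (cases "Suc m = 1")
      case True
      then have "v 2 = 0" using Suc.prems(2) by fastforce
      moreover have "1 \<le> N" using Suc.prems(1) True by simp
      moreover have "(if 2 \<le> N then v 2 else 0) = 0" using \<open>v 2 = 0\<close> by simp
      moreover have "(if 1 \<le> N then v 1 else 0) = v 1" using \<open>1 \<le> N\<close> by simp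
      ultimately have "v 1 = 0" using s1 Suc.prems(3) by linarith
      with \<open>v 2 = 0\<close> show ?thesis by simp
    next
      case False
      then have "2 \<le> N" using Suc.prems(1) True by simp
      then show ?thesis using s1 s2 Suc.prems(3,4) by simp
    qed
    then have "v = (\<lambda>k. 0)"
    proof (intro ext)
      fix k assume "v 1 = 0 \<and> v 2 = 0"
      then show "v k = 0" using sup[of k] by (cases "k = 1"; cases "k = 2") simp_all
    qed
    then show ?thesis using span1_0 by simp
  next
    case False
    define a where "a = m - 1"
    have a1: "1 \<le> a" "a + 2 \<le> N" "Suc (Suc a) = Suc m" using False Suc.prems(1) by (auto simp: a_def)
    define z where "z = v (Suc m)"
    define w where "w = (\<lambda>k. v k - z * c a k)"
    have cS: "c a (Suc m) = 1" using a1 by (auto simp: c_def g_def)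
    have w1: "\<forall>k. w k \<noteq> 0 \<longrightarrow> 1 \<le> k \<and> k \<le> m"
    proof (intro allI impI)
      fix k assume "w k \<noteq> 0"
      then have "v k \<noteq> 0 \<or> c a k \<noteq> 0" by (auto simp: w_def)
      then have "1 \<le> k \<and> k \<le> Suc m" using Suc.prems(2) a1 by (auto simp: c_def g_def split: if_splits)
      moreover have "k \<noteq> Suc m" using \<open>w k \<noteq> 0\<close> cS by (auto simp: w_def z_def)
      ultimately show "1 \<le> k \<and> k \<le> m" by auto
    qed
    have w2: "(\<Sum>k=1..N. w k) = 0"
      using Suc.prems(3) c_sum[OF a1(1,2)] by (simp add: w_def sum_subtractf sum_distrib_left[symmetric])
    have w3: "(\<Sum>k=1..N. int k * w k) = 0"
    proof -
      have "(\<Sum>k=1..N. int k * w k) = (\<Sum>k=1..N. int k * v k) - z * (\<Sum>k=1..N. int k * c a k)"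
        by (simp add: w_def right_diff_distrib sum_subtractf sum_distrib_left algebra_simps)
      then show ?thesis using Suc.prems(4) c_msum[OF a1(1,2)] by simp
    qed
    have "span1 N w" using Suc.IH[OF _ w1 w2 w3] Suc.prems(1) by simp
    then have "span1 N (\<lambda>k. w k + z * c a k)" using span1_step a1 by blast
    moreover have "(\<lambda>k. w k + z * c a k) = v" by (auto simp: w_def)
    ultimately show ?thesis by simp
  qed
qed


lemma L0:
  assumes "\<forall>y. y \<notin> {1..n} \<longrightarrow> w y = 0" "(\<Sum>y=1..n. w y) = 0"
  shows "(\<Sum>j=2..n. g 1 j y * w j) = - w y"
proof (cases "y = 1")
  case True
  have "(\<Sum>j=2..n. g 1 j y * w j) = (\<Sum>j=2..n. w j)"
    using True by (intro sum.cong) (auto simp: g_def)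
  also have "\<dots> = - w y"
  proof (cases "n = 0")
    case True then show ?thesis using assms \<open>y = 1\<close> by simp
  next
    case False
    then have "(\<Sum>y=1..n. w y) = w 1 + (\<Sum>j=2..n. w j)"
      using sum.atLeast_Suc_atMost[of 1 n w] by (simp add: numeral_2_eq_2)
    then show ?thesis using assms(2) \<open>y = 1\<close> by simp
  qed
  finally show ?thesis .
next
  case False
  have "(\<Sum>j=2..n. g 1 j y * w j) = (\<Sum>j=2..n. if y = j then - w j else 0)"
    using False by (intro sum.cong) (auto simp: g_def)
  also have "\<dots> = - w y" using False assms(1) by auto
  finally show ?thesis .
qed

lemma decomp_main:
  assumes S: "\<And>i j k. \<not> (i \<in> {1..n} \<and> j \<in> {1..n} \<and> k \<in> {1..n}) \<Longrightarrow> D i j k = 0"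
    and R: "\<And>j k. (\<Sum>i=1..n. D i j k) = 0"
    and C: "\<And>i k. (\<Sum>j=1..n. D i j k) = 0"
    and V: "\<And>i j. (\<Sum>k=1..n. D i j k) = 0"
    and M: "\<And>i j. (\<Sum>k=1..n. int k * D i j k) = 0"
  shows "decomp n D"
proof -
  have Si: "\<forall>y. y \<notin> {1..n} \<longrightarrow> D y j k = 0" for j k using S by blast
  have Sj: "\<forall>y. y \<notin> {1..n} \<longrightarrow> D i y k = 0" for i k using S by blast
  have Sk: "\<forall>k. D i j k \<noteq> 0 \<longrightarrow> 1 \<le> k \<and> k \<le> n" for i j
    using S atLeastAtMost_iff by blast
  have sp: "span1 n (\<lambda>k. D i j k)" for i j
    using span1_lemma[of n n "\<lambda>k. D i j k", OF order.refl Sk V M] .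
  have id: "D i' j' k = (\<Sum>i\<in>{2..n}. \<Sum>j\<in>{2..n}. H i j (\<lambda>k. D i j k) i' j' k)" for i' j' k
  proof -
    have "(\<Sum>i\<in>{2..n}. \<Sum>j\<in>{2..n}. H i j (\<lambda>k. D i j k) i' j' k)
        = (\<Sum>i\<in>{2..n}. g 1 i i' * (\<Sum>j\<in>{2..n}. g 1 j j' * D i j k))"
      by (simp add: H_def sum_distrib_left mult.assoc)
    also have "\<dots> = (\<Sum>i\<in>{2..n}. g 1 i i' * (- D i j' k))"
      using L0[OF Sj C] by simp
    also have "\<dots> = - (\<Sum>i\<in>{2..n}. g 1 i i' * D i j' k)"
      by (simp add: sum_negf)
    also have "\<dots> = D i' j' k"
      using L0[OF Si R] by simp
    finally show ?thesis by simp
  qed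
  have inner: "decomp n (\<lambda>i' j' k. \<Sum>j\<in>{2..n}. H i j (\<lambda>k. D i j k) i' j' k)"
    if i: "i \<in> {2..n}" for i
  proof -
    have "\<forall>j\<in>{2..n}. decomp n (H i j (\<lambda>k. D i j k))"
      using decomp_H[OF sp] i by auto
    then show ?thesis
      using decomp_sum[where S="{2..n}" and F="\<lambda>j. H i j (\<lambda>k. D i j k)" and n=n] by simp
  qed
  have "decomp n (\<lambda>i' j' k. \<Sum>i\<in>{2..n}. \<Sum>j\<in>{2..n}. H i j (\<lambda>k. D i j k) i' j' k)"
    using decomp_sum[where S="{2..n}" and F="\<lambda>i i' j' k. \<Sum>j\<in>{2..n}. H i j (\<lambda>k. D i j k) i' j' k" and n=n]
      inner by simp
  moreover have "D = (\<lambda>i' j' k. \<Sum>i\<in>{2..n}. \<Sum>j\<in>{2..n}. H i j (\<lambda>k. D i j k) i' j' k)"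
    by (intro ext) (rule id)
  ultimately show ?thesis by simp
qed


lemma alt_list_sum:
  "xs \<noteq> [] \<Longrightarrow> hd xs = 1 \<Longrightarrow> last xs = 1 \<Longrightarrow>
   (\<forall>m. Suc m < length xs \<longrightarrow> xs ! Suc m = - (xs ! m)) \<Longrightarrow> sum_list xs = (1::int)"
proof (induction "length xs" arbitrary: xs rule: less_induct)
  case less
  obtain x ys where xs: "xs = x # ys" using less.prems(1) by (cases xs) auto
  have x: "x = 1" using less.prems(2) xs by simp
  show ?case
  proof (cases ys)
    case Nil then show ?thesis using xs x by simp
  next
    case (Cons y zs)
    have y: "y = -1" using less.prems(4)[rule_format, of 0] xs x Cons by simp
    have zs: "zs \<noteq> []" using less.prems(3) xs Cons y by auto
    have hz: "hd zs = 1"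
      using less.prems(4)[rule_format, of 1] xs Cons y zs by (cases zs) auto
    have lz: "last zs = 1" using less.prems(3) xs Cons zs by simp
    have az: "\<forall>m. Suc m < length zs \<longrightarrow> zs ! Suc m = - (zs ! m)"
    proof (intro allI impI)
      fix m assume "Suc m < length zs"
      then show "zs ! Suc m = - (zs ! m)"
        using less.prems(4)[rule_format, of "Suc (Suc m)"] xs Cons by simp
    qed
    have "sum_list zs = 1" using less.hyps[of zs] xs Cons zs hz lz az by simp
    then show ?thesis using xs x Cons y by simp
  qed
qed

lemma sum_list_filter_nz: "sum_list (filter (\<lambda>x. x \<noteq> 0) ys) = sum_list (ys :: int list)"
  by (induction ys) auto

lemma alt_sum:
  assumes "alt_sign_line n v"
  shows "(\<Sum>k=1..n. v k) = 1"
proof -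
  let ?xs = "filter (\<lambda>x. x \<noteq> 0) (map v [1..<n+1])"
  have "sum_list ?xs = 1"
    using assms unfolding alt_sign_line_def Let_def by (intro alt_list_sum) auto
  moreover have "sum_list ?xs = sum_list (map v [1..<n+1])"
    by (rule sum_list_filter_nz)
  moreover have "sum_list (map v [1..<n+1]) = (\<Sum>k=1..n. v k)"
  proof -
    have "{1..n} = set [1..<n+1]" by auto
    then show ?thesis by (simp only: sum_set_upt_conv_sum_list_nat)
  qed
  ultimately show ?thesis by simp
qed

lemma tblock_moment:
  assumes "valid_tblock n (s, i1, j1, k1, i2, j2, k2)"
  shows "(\<Sum>k=1..n. int k * tblock_hm (s, i1, j1, k1, i2, j2, k2) i j k)
         = - depth (s, i1, j1, k1, i2, j2, k2) * (g i1 i2 i * g j1 j2 j)"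
proof -
  have ne: "i1 \<noteq> i2" "j1 \<noteq> j2" "k1 \<noteq> k2" "k1 \<in> {1..n}" "k2 \<in> {1..n}" using assms by auto
  have "(\<Sum>k=1..n. int k * tblock_hm (s, i1, j1, k1, i2, j2, k2) i j k)
       = (s * g i1 i2 i * g j1 j2 j) * (\<Sum>k=1..n. int k * g k1 k2 k)"
    by (simp add: Thm_g ne sum_distrib_left algebra_simps)
  also have "\<dots> = (s * g i1 i2 i * g j1 j2 j) * (int k1 - int k2)"
    using msum_g[OF ne(4,5,3)] by simp
  also have "\<dots> = - depth (s, i1, j1, k1, i2, j2, k2) * (g i1 i2 i * g j1 j2 j)"
    using assms by (auto simp: algebra_simps)
  finally show ?thesis .
qed

lemma vlines_eq:
  assumes "valid_tblock n (s, i1, j1, k1, i2, j2, k2)" "valid_tblock n (s', i1', j1', k1', i2', j2', k2')"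
    "vlines (s, i1, j1, k1, i2, j2, k2) = vlines (s', i1', j1', k1', i2', j2', k2')"
  shows "i1 = i1' \<and> i2 = i2' \<and> j1 = j1' \<and> j2 = j2'"
proof -
  have a: "i1 < i2" "j1 < j2" "i1' < i2'" "j1' < j2'" using assms(1,2) by auto
  have e: "{(i1, j1), (i1, j2), (i2, j1), (i2, j2)} = {(i1', j1'), (i1', j2'), (i2', j1'), (i2', j2')}"
    using assms(3) by simp
  have m1: "(i1, j1) \<in> {(i1', j1'), (i1', j2'), (i2', j1'), (i2', j2')}"
    unfolding e[symmetric] by simp
  have m2: "(i1', j1') \<in> {(i1, j1), (i1, j2), (i2, j1), (i2, j2)}"
    unfolding e by simp
  have m3: "(i2, j2) \<in> {(i1', j1'), (i1', j2'), (i2', j1'), (i2', j2')}"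
    unfolding e[symmetric] by simp
  have m4: "(i2', j2') \<in> {(i1, j1), (i1, j2), (i2, j1), (i2, j2)}"
    unfolding e by simp
  have d1: "i1 = i1' \<or> i1 = i2'" "j1 = j1' \<or> j1 = j2'" using m1 by auto
  have d2: "i1' = i1 \<or> i1' = i2" "j1' = j1 \<or> j1' = j2" using m2 by auto
  have d3: "i2 = i1' \<or> i2 = i2'" "j2 = j1' \<or> j2 = j2'" using m3 by auto
  have d4: "i2' = i1 \<or> i2' = i2" "j2' = j1 \<or> j2' = j2" using m4 by auto
  have "i1 = i1'" using d1(1) d2(1) a by linarith
  moreover have "j1 = j1'" using d1(2) d2(2) a by linarith
  moreover have "i2 = i2'" using d3(1) d4(1) a by linarith
  moreover have "j2 = j2'" using d3(2) d4(2) a by linarith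
  ultimately show ?thesis by simp
qed

lemma pair_moment:
  assumes "valid_tblock n T1" "valid_tblock n T2" "depth T1 = - depth T2" "vlines T1 = vlines T2"
  shows "(\<Sum>k=1..n. int k * (tblock_hm T1 i j k + tblock_hm T2 i j k)) = 0"
proof -
  obtain s i1 j1 k1 i2 j2 k2 where T1: "T1 = (s, i1, j1, k1, i2, j2, k2)" by (cases T1) auto
  obtain s' i1' j1' k1' i2' j2' k2' where T2: "T2 = (s', i1', j1', k1', i2', j2', k2')" by (cases T2) auto
  have e: "i1 = i1' \<and> i2 = i2' \<and> j1 = j1' \<and> j2 = j2'"
    using vlines_eq[of n s i1 j1 k1 i2 j2 k2 s' i1' j1' k1' i2' j2' k2'] assms T1 T2 by simp
  have "(\<Sum>k=1..n. int k * (tblock_hm T1 i j k + tblock_hm T2 i j k))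
      = (\<Sum>k=1..n. int k * tblock_hm T1 i j k) + (\<Sum>k=1..n. int k * tblock_hm T2 i j k)"
    by (simp add: distrib_left sum.distrib)
  also have "\<dots> = (- depth T1 - depth T2) * (g i1 i2 i * g j1 j2 j)"
  proof -
    have m1: "(\<Sum>k=1..n. int k * tblock_hm T1 i j k) = - depth T1 * (g i1 i2 i * g j1 j2 j)"
      using tblock_moment[of n s i1 j1 k1 i2 j2 k2 i j] assms(1) T1 by simp
    have m2: "(\<Sum>k=1..n. int k * tblock_hm T2 i j k) = - depth T2 * (g i1 i2 i * g j1 j2 j)"
      using tblock_moment[of n s' i1' j1' k1' i2' j2' k2' i j] assms(2) T2 e by simp
    show ?thesis unfolding m1 m2 by (simp only: left_diff_distrib)
  qed
  also have "\<dots> = 0" using assms(3) by simp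
  finally show ?thesis .
qed

lemma list_moment:
  assumes "\<forall>(T1, T2) \<in> set ps. valid_tblock n T1 \<and> valid_tblock n T2 \<and>
                            depth T1 = - depth T2 \<and> vlines T1 = vlines T2"
  shows "(\<Sum>k=1..n. int k * (\<Sum>(T1, T2) \<leftarrow> ps. tblock_hm T1 i j k + tblock_hm T2 i j k)) = 0"
  using assms
proof (induction ps)
  case Nil then show ?case by simp
next
  case (Cons p ps)
  obtain T1 T2 where p: "p = (T1, T2)" by (cases p)
  have "(\<Sum>k=1..n. int k * (\<Sum>(T1, T2) \<leftarrow> p # ps. tblock_hm T1 i j k + tblock_hm T2 i j k))
      = (\<Sum>k=1..n. int k * (tblock_hm T1 i j k + tblock_hm T2 i j k))
        + (\<Sum>k=1..n. int k * (\<Sum>(T1, T2) \<leftarrow> ps. tblock_hm T1 i j k + tblock_hm T2 i j k))"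
    by (simp add: p distrib_left sum.distrib)
  also have "\<dots> = 0" using Cons pair_moment[of n T1 T2 i j] p by simp
  finally show ?case .
qed


lemma ashm_sums:
  assumes "ashm n A"
  shows "\<And>i j k. \<not> (i \<in> {1..n} \<and> j \<in> {1..n} \<and> k \<in> {1..n}) \<Longrightarrow> A i j k = 0"
    and "\<And>j k. (\<Sum>i=1..n. A i j k) = (if j \<in> {1..n} \<and> k \<in> {1..n} then 1 else 0)"
    and "\<And>i k. (\<Sum>j=1..n. A i j k) = (if i \<in> {1..n} \<and> k \<in> {1..n} then 1 else 0)"
    and "\<And>i j. (\<Sum>k=1..n. A i j k) = (if i \<in> {1..n} \<and> j \<in> {1..n} then 1 else 0)"
proof -
  have S: "\<And>i j k. \<not> (i \<in> {1..n} \<and> j \<in> {1..n} \<and> k \<in> {1..n}) \<Longrightarrow> A i j k = 0"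
    using assms unfolding ashm_def by blast
  then show "\<And>i j k. \<not> (i \<in> {1..n} \<and> j \<in> {1..n} \<and> k \<in> {1..n}) \<Longrightarrow> A i j k = 0" .
  show "(\<Sum>i=1..n. A i j k) = (if j \<in> {1..n} \<and> k \<in> {1..n} then 1 else 0)" for j k
  proof (cases "j \<in> {1..n} \<and> k \<in> {1..n}")
    case True
    then have "alt_sign_line n (\<lambda>i. A i j k)" using assms unfolding ashm_def by blast
    then show ?thesis using alt_sum True by simp
  next
    case False
    then have "\<forall>i. A i j k = 0" using S by blast
    then show ?thesis using False by simp
  qed
  show "(\<Sum>j=1..n. A i j k) = (if i \<in> {1..n} \<and> k \<in> {1..n} then 1 else 0)" for i k
  proof (cases "i \<in> {1..n} \<and> k \<in> {1..n}")
    case True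
    then have "alt_sign_line n (\<lambda>j. A i j k)" using assms unfolding ashm_def by blast
    then show ?thesis using alt_sum True by simp
  next
    case False
    then have "\<forall>j. A i j k = 0" using S by blast
    then show ?thesis using False by simp
  qed
  show "(\<Sum>k=1..n. A i j k) = (if i \<in> {1..n} \<and> j \<in> {1..n} then 1 else 0)" for i j
  proof (cases "i \<in> {1..n} \<and> j \<in> {1..n}")
    case True
    then have "alt_sign_line n (\<lambda>k. A i j k)" using assms unfolding ashm_def by blast
    then show ?thesis using alt_sum True by simp
  next
    case False
    then have "\<forall>k. A i j k = 0" using S by blast
    then show ?thesis using False by simp
  qed
qed

theorem theorem2p8:
  fixes n :: nat and A B :: hypermatrix
  assumes "ashm n A" and "ashm n B"
  shows "Lmat n A = Lmat n B \<longleftrightarrow>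
    (\<exists>ps :: (tblock \<times> tblock) list.
       (\<forall>(T1, T2) \<in> set ps. valid_tblock n T1 \<and> valid_tblock n T2 \<and>
                            depth T1 = - depth T2 \<and> vlines T1 = vlines T2) \<and>
       (\<lambda>i j k. A i j k - B i j k) =
         (\<lambda>i j k. \<Sum>(T1, T2) \<leftarrow> ps. tblock_hm T1 i j k + tblock_hm T2 i j k))"
proof
  assume L: "Lmat n A = Lmat n B"
  note a = ashm_sums[OF assms(1)]
  note b = ashm_sums[OF assms(2)]
  have "decomp n (\<lambda>i j k. A i j k - B i j k)"
  proof (rule decomp_main)
    show "A i j k - B i j k = 0" if "\<not> (i \<in> {1..n} \<and> j \<in> {1..n} \<and> k \<in> {1..n})" for i j k
      using a(1)[OF that] b(1)[OF that] by simp
    show "(\<Sum>i=1..n. A i j k - B i j k) = 0" for j k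
      using a(2)[of j k] b(2)[of j k] by (simp add: sum_subtractf)
    show "(\<Sum>j=1..n. A i j k - B i j k) = 0" for i k
      using a(3)[of i k] b(3)[of i k] by (simp add: sum_subtractf)
    show "(\<Sum>k=1..n. A i j k - B i j k) = 0" for i j
      using a(4)[of i j] b(4)[of i j] by (simp add: sum_subtractf)
    show "(\<Sum>k=1..n. int k * (A i j k - B i j k)) = 0" for i j
    proof -
      have "Lmat n A i j = Lmat n B i j" using L by simp
      then show ?thesis by (simp add: Lmat_def right_diff_distrib sum_subtractf)
    qed
  qed
  then show "\<exists>ps :: (tblock \<times> tblock) list.
       (\<forall>(T1, T2) \<in> set ps. valid_tblock n T1 \<and> valid_tblock n T2 \<and>
                            depth T1 = - depth T2 \<and> vlines T1 = vlines T2) \<and>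
       (\<lambda>i j k. A i j k - B i j k) =
         (\<lambda>i j k. \<Sum>(T1, T2) \<leftarrow> ps. tblock_hm T1 i j k + tblock_hm T2 i j k)"
    unfolding decomp_def .
next
  assume "\<exists>ps :: (tblock \<times> tblock) list.
       (\<forall>(T1, T2) \<in> set ps. valid_tblock n T1 \<and> valid_tblock n T2 \<and>
                            depth T1 = - depth T2 \<and> vlines T1 = vlines T2) \<and>
       (\<lambda>i j k. A i j k - B i j k) =
         (\<lambda>i j k. \<Sum>(T1, T2) \<leftarrow> ps. tblock_hm T1 i j k + tblock_hm T2 i j k)"
  then obtain ps :: "(tblock \<times> tblock) list" where
    p1: "\<forall>(T1, T2) \<in> set ps. valid_tblock n T1 \<and> valid_tblock n T2 \<and>
                            depth T1 = - depth T2 \<and> vlines T1 = vlines T2" and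
    p2: "(\<lambda>i j k. A i j k - B i j k) =
         (\<lambda>i j k. \<Sum>(T1, T2) \<leftarrow> ps. tblock_hm T1 i j k + tblock_hm T2 i j k)" by blast
  show "Lmat n A = Lmat n B"
  proof (intro ext)
    fix i j
    have e: "A i j k - B i j k = (\<Sum>(T1, T2) \<leftarrow> ps. tblock_hm T1 i j k + tblock_hm T2 i j k)" for k
      using fun_cong[OF fun_cong[OF fun_cong[OF p2, of i], of j], of k] by simp
    have "Lmat n A i j - Lmat n B i j = (\<Sum>k=1..n. int k * (A i j k - B i j k))"
      by (simp add: Lmat_def right_diff_distrib sum_subtractf)
    also have "\<dots> = (\<Sum>k=1..n. int k * (\<Sum>(T1, T2) \<leftarrow> ps. tblock_hm T1 i j k + tblock_hm T2 i j k))"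
      by (simp only: e)
    also have "\<dots> = 0" using list_moment[OF p1] by simp
    finally show "Lmat n A i j = Lmat n B i j" by simp
  qed
qed

end
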